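(* Let $(G,\mathcal{B}_1,\mathcal{B}_2)$ be a Rota-Baxter system of groups. For any $a\in G$, $\mathcal{B}_1(a)\mathcal{B}_2(a)=1_G$ if and only if $\mathcal{B}_1(a)=1_G$ and $\mathcal{B}_2(a)=1_G$.
   Context: A Rota-Baxter system of groups is a triple $(G,\mathcal{B}_1,\mathcal{B}_2)$ where $G$ is a group with identity $1_G$ and $\mathcal{B}_1,\mathcal{B}_2:G\to G$ are maps such that for all $a,b\in G$: $\mathcal{B}_1(a)\mathcal{B}_1(b)=\mathcal{B}_1(\mathcal{B}_1(a)b\mathcal{B}_2(a))$ and $\mathcal{B}_2(b)\mathcal{B}_2(a)=\mathcal{B}_2(\mathcal{B}_1(a)b\mathcal{B}_2(a))$. *)

theory Defs
  imports "HOL-Algebra.Group"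
begin

definition rota_baxter_system :: "('a, 'b) monoid_scheme \<Rightarrow> ('a \<Rightarrow> 'a) \<Rightarrow> ('a \<Rightarrow> 'a) \<Rightarrow> bool" where
  "rota_baxter_system G B1 B2 \<longleftrightarrow>
     group G \<and>
     B1 \<in> carrier G \<rightarrow> carrier G \<and> B2 \<in> carrier G \<rightarrow> carrier G \<and>
     (\<forall>a\<in>carrier G. \<forall>b\<in>carrier G.
        B1 a \<otimes>\<^bsub>G\<^esub> B1 b = B1 (B1 a \<otimes>\<^bsub>G\<^esub> b \<otimes>\<^bsub>G\<^esub> B2 a) \<and>
        B2 b \<otimes>\<^bsub>G\<^esub> B2 a = B2 (B1 a \<otimes>\<^bsub>G\<^esub> b \<otimes>\<^bsub>G\<^esub> B2 a))"

end

theory Submission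
  imports Defs
begin

theorem corollary4p5:
  fixes G (structure)
  assumes "rota_baxter_system G B1 B2"
    and "a \<in> carrier G"
  shows "B1 a \<otimes> B2 a = \<one> \<longleftrightarrow> B1 a = \<one> \<and> B2 a = \<one>"
proof -
  have g: "group G" using assms(1) unfolding rota_baxter_system_def by blast
  interpret group G by (rule g)
  have c1: "B1 x \<in> carrier G" and c2: "B2 x \<in> carrier G" if "x \<in> carrier G" for x
    using assms(1) that unfolding rota_baxter_system_def by auto
  have ax: "B1 a \<otimes> B1 \<one> = B1 (B1 a \<otimes> \<one> \<otimes> B2 a)" "B2 \<one> \<otimes> B2 a = B2 (B1 a \<otimes> \<one> \<otimes> B2 a)"
    using assms unfolding rota_baxter_system_def by auto
  show ?thesis
  proof
    assume h: "B1 a \<otimes> B2 a = \<one>"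
    have e: "B1 a \<otimes> \<one> \<otimes> B2 a = \<one>" using h c1 assms(2) by simp
    have "B1 a \<otimes> B1 \<one> = \<one> \<otimes> B1 \<one>" using ax(1) e c1[of \<one>] by simp
    hence 1: "B1 a = \<one>" using c1[of \<one>] c1 assms(2) right_cancel by (metis one_closed)
    have "B2 \<one> \<otimes> B2 a = B2 \<one> \<otimes> \<one>" using ax(2) e c2[of \<one>] by simp
    hence "B2 a = \<one>" using c2[of \<one>] c2 assms(2) Units_l_cancel Units_eq one_closed by metis
    with 1 show "B1 a = \<one> \<and> B2 a = \<one>" by blast
  qed simp
qed

end
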